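(* For a semiring $(S,+,\cdot)$ the following are equivalent: (i) $S$ is a quasi completely regular semiring and $E^+(S)$ is a subsemigroup of $(S,+)$; (ii) $S$ is additively quasi regular, $b^2\,\mathscr{H}^{*^{+}}\,b$ for all $b\in S$, for all $a,x\in S$ $a=a+x+a$ implies $a=a+2x+2a$, and $Reg^+S$ is a subsemigroup of $(S,+)$; (iii) $S$ is a b-lattice of nil-extensions of rectangular skew-rings and $E^+(S)$ is a subsemigroup of $(S,+)$.
   Context: A semiring $(S,+,\cdot)$ has two associative operations with $a(b+c)=ab+ac$, $(b+c)a=ba+ca$. $na$ is the $n$-fold sum of $a$; $b^2=b\cdot b$. $E^+(S)$ is the set of additive idempotents; $Reg^+S$ is the set of additively regular elements, where $a$ is additively regular if $a=a+x+a$ for some $x\in S$. $S$ is additively quasi regular if for each $a$ some $na$ is additively regular. $a$ is completely regular if there is $x$ with $a=a+x+a$, $a+x=x+a$, $a(a+x)=a+x$; $S$ is quasi completely regular if for each $a$ some $na$ is completely regular. Green's relations of $(S,+)$: $\mathscr{L}^+,\mathscr{R}^+,\mathscr{J}^+$. For additively quasi regular $S$, $m(a)$ is the least positive integer with $m(a)a$ additively regular; $a\,\mathscr{L}^{*^{+}}\,b$ iff $m(a)a\,\mathscr{L}^+\,m(b)b$, $a\,\mathscr{R}^{*^{+}}\,b$ iff $m(a)a\,\mathscr{R}^+\,m(b)b$, $\mathscr{H}^{*^{+}}=\mathscr{L}^{*^{+}}\cap\mathscr{R}^{*^{+}}$. A completely simple semiring: all elements completely regular and $\mathscr{J}^+=S\times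 S$. A rectangular skew-ring: completely simple semiring $K$ with $E^+(K)$ a subsemigroup of $(K,+)$. $S$ is a nil-extension of a subsemiring $K$ if $K$ is a bi-ideal ($a\in K,x\in S\Rightarrow a+x,x+a,ax,xa\in K$) and every $a\in S$ has some $na\in K$. A b-lattice is a semiring with $(S,\cdot)$ a band and $(S,+)$ a semilattice; $S$ is a b-lattice of semirings of a class if there is a congruence $\rho$ with $S/\rho$ a b-lattice and each $\rho$-class a subsemiring in that class. *)

theory Defs
  imports Main
begin

text \<open>A semiring is given by a carrier S with two binary operations p (addition)
 and m (multiplication); no zero, no identity, addition not assumed commutative.
 All notions are relative to a carrier set so that they apply to subsemirings.\<close>

definition sr_semiring :: "'a set \<Rightarrow> ('a \<Rightarrow> 'a \<Rightarrow> 'a) \<Rightarrow> ('a \<Rightarrow> 'a \<Rightarrow> 'a) \<Rightarrow> bool" where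
  "sr_semiring S p m \<longleftrightarrow>
     (\<forall>a\<in>S. \<forall>b\<in>S. p a b \<in> S \<and> m a b \<in> S) \<and>
     (\<forall>a\<in>S. \<forall>b\<in>S. \<forall>c\<in>S. p (p a b) c = p a (p b c) \<and> m (m a b) c = m a (m b c) \<and>
        m a (p b c) = p (m a b) (m a c) \<and> m (p b c) a = p (m b a) (m c a))"

text \<open>n-fold sum n a, meaningful for n \<ge> 1.\<close>
fun nsum :: "('a \<Rightarrow> 'a \<Rightarrow> 'a) \<Rightarrow> nat \<Rightarrow> 'a \<Rightarrow> 'a" where
  "nsum p 0 a = a"
| "nsum p (Suc 0) a = a"
| "nsum p (Suc (Suc n)) a = p (nsum p (Suc n) a) a"

definition add_idem :: "'a set \<Rightarrow> ('a \<Rightarrow> 'a \<Rightarrow> 'a) \<Rightarrow> 'a set" where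
  "add_idem S p = {e\<in>S. p e e = e}"

definition add_regular :: "'a set \<Rightarrow> ('a \<Rightarrow> 'a \<Rightarrow> 'a) \<Rightarrow> 'a \<Rightarrow> bool" where
  "add_regular S p a \<longleftrightarrow> (\<exists>x\<in>S. a = p (p a x) a)"

definition Reg_add :: "'a set \<Rightarrow> ('a \<Rightarrow> 'a \<Rightarrow> 'a) \<Rightarrow> 'a set" where
  "Reg_add S p = {a\<in>S. add_regular S p a}"

definition subsemigroup :: "'a set \<Rightarrow> ('a \<Rightarrow> 'a \<Rightarrow> 'a) \<Rightarrow> bool" where
  "subsemigroup T p \<longleftrightarrow> (\<forall>a\<in>T. \<forall>b\<in>T. p a b \<in> T)"

definition add_quasi_regular :: "'a set \<Rightarrow> ('a \<Rightarrow> 'a \<Rightarrow> 'a) \<Rightarrow> bool" where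
  "add_quasi_regular S p \<longleftrightarrow> (\<forall>a\<in>S. \<exists>n>0. add_regular S p (nsum p n a))"

definition completely_regular :: "'a set \<Rightarrow> ('a \<Rightarrow> 'a \<Rightarrow> 'a) \<Rightarrow> ('a \<Rightarrow> 'a \<Rightarrow> 'a) \<Rightarrow> 'a \<Rightarrow> bool" where
  "completely_regular S p m a \<longleftrightarrow>
     (\<exists>x\<in>S. a = p (p a x) a \<and> p a x = p x a \<and> m a (p a x) = p a x)"

definition quasi_completely_regular :: "'a set \<Rightarrow> ('a \<Rightarrow> 'a \<Rightarrow> 'a) \<Rightarrow> ('a \<Rightarrow> 'a \<Rightarrow> 'a) \<Rightarrow> bool" where
  "quasi_completely_regular S p m \<longleftrightarrow>
     (\<forall>a\<in>S. \<exists>n>0. completely_regular S p m (nsum p n a))"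

definition mindex :: "'a set \<Rightarrow> ('a \<Rightarrow> 'a \<Rightarrow> 'a) \<Rightarrow> 'a \<Rightarrow> nat" where
  "mindex S p a = (LEAST n. 0 < n \<and> add_regular S p (nsum p n a))"

text \<open>Green's relations of the semigroup (S,+) (via S^1).\<close>
definition greenL :: "'a set \<Rightarrow> ('a \<Rightarrow> 'a \<Rightarrow> 'a) \<Rightarrow> 'a \<Rightarrow> 'a \<Rightarrow> bool" where
  "greenL S p a b \<longleftrightarrow> a \<in> S \<and> b \<in> S \<and>
     (a = b \<or> (\<exists>x\<in>S. a = p x b)) \<and> (b = a \<or> (\<exists>y\<in>S. b = p y a))"

definition greenR :: "'a set \<Rightarrow> ('a \<Rightarrow> 'a \<Rightarrow> 'a) \<Rightarrow> 'a \<Rightarrow> 'a \<Rightarrow> bool" where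
  "greenR S p a b \<longleftrightarrow> a \<in> S \<and> b \<in> S \<and>
     (a = b \<or> (\<exists>x\<in>S. a = p b x)) \<and> (b = a \<or> (\<exists>y\<in>S. b = p a y))"

definition ideal_principal :: "'a set \<Rightarrow> ('a \<Rightarrow> 'a \<Rightarrow> 'a) \<Rightarrow> 'a \<Rightarrow> 'a set" where
  "ideal_principal S p b = {b} \<union> {p x b |x. x\<in>S} \<union> {p b y |y. y\<in>S} \<union> {p (p x b) y |x y. x\<in>S \<and> y\<in>S}"

definition greenJ :: "'a set \<Rightarrow> ('a \<Rightarrow> 'a \<Rightarrow> 'a) \<Rightarrow> 'a \<Rightarrow> 'a \<Rightarrow> bool" where
  "greenJ S p a b \<longleftrightarrow> a \<in> S \<and> b \<in> S \<and> ideal_principal S p a = ideal_principal S p b"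

definition Lstar :: "'a set \<Rightarrow> ('a \<Rightarrow> 'a \<Rightarrow> 'a) \<Rightarrow> 'a \<Rightarrow> 'a \<Rightarrow> bool" where
  "Lstar S p a b \<longleftrightarrow> greenL S p (nsum p (mindex S p a) a) (nsum p (mindex S p b) b)"

definition Rstar :: "'a set \<Rightarrow> ('a \<Rightarrow> 'a \<Rightarrow> 'a) \<Rightarrow> 'a \<Rightarrow> 'a \<Rightarrow> bool" where
  "Rstar S p a b \<longleftrightarrow> greenR S p (nsum p (mindex S p a) a) (nsum p (mindex S p b) b)"

definition Hstar :: "'a set \<Rightarrow> ('a \<Rightarrow> 'a \<Rightarrow> 'a) \<Rightarrow> 'a \<Rightarrow> 'a \<Rightarrow> bool" where
  "Hstar S p a b \<longleftrightarrow> Lstar S p a b \<and> Rstar S p a b"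

definition completely_simple :: "'a set \<Rightarrow> ('a \<Rightarrow> 'a \<Rightarrow> 'a) \<Rightarrow> ('a \<Rightarrow> 'a \<Rightarrow> 'a) \<Rightarrow> bool" where
  "completely_simple K p m \<longleftrightarrow> sr_semiring K p m \<and>
     (\<forall>a\<in>K. completely_regular K p m a) \<and> (\<forall>a\<in>K. \<forall>b\<in>K. greenJ K p a b)"

definition rect_skew_ring :: "'a set \<Rightarrow> ('a \<Rightarrow> 'a \<Rightarrow> 'a) \<Rightarrow> ('a \<Rightarrow> 'a \<Rightarrow> 'a) \<Rightarrow> bool" where
  "rect_skew_ring K p m \<longleftrightarrow> completely_simple K p m \<and> subsemigroup (add_idem K p) p"

definition bi_ideal :: "'a set \<Rightarrow> 'a set \<Rightarrow> ('a \<Rightarrow> 'a \<Rightarrow> 'a) \<Rightarrow> ('a \<Rightarrow> 'a \<Rightarrow> 'a) \<Rightarrow> bool" where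
  "bi_ideal S K p m \<longleftrightarrow> K \<subseteq> S \<and>
     (\<forall>a\<in>K. \<forall>x\<in>S. p a x \<in> K \<and> p x a \<in> K \<and> m a x \<in> K \<and> m x a \<in> K)"

definition nil_extension :: "'a set \<Rightarrow> 'a set \<Rightarrow> ('a \<Rightarrow> 'a \<Rightarrow> 'a) \<Rightarrow> ('a \<Rightarrow> 'a \<Rightarrow> 'a) \<Rightarrow> bool" where
  "nil_extension S K p m \<longleftrightarrow> sr_semiring K p m \<and> bi_ideal S K p m \<and>
     (\<forall>a\<in>S. \<exists>n>0. nsum p n a \<in> K)"

definition nil_ext_rect_skew_ring :: "'a set \<Rightarrow> ('a \<Rightarrow> 'a \<Rightarrow> 'a) \<Rightarrow> ('a \<Rightarrow> 'a \<Rightarrow> 'a) \<Rightarrow> bool" where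
  "nil_ext_rect_skew_ring S p m \<longleftrightarrow> sr_semiring S p m \<and>
     (\<exists>K. rect_skew_ring K p m \<and> nil_extension S K p m)"

definition sr_congruence :: "'a set \<Rightarrow> ('a \<Rightarrow> 'a \<Rightarrow> 'a) \<Rightarrow> ('a \<Rightarrow> 'a \<Rightarrow> 'a) \<Rightarrow> 'a rel \<Rightarrow> bool" where
  "sr_congruence S p m \<rho> \<longleftrightarrow> equiv S \<rho> \<and>
     (\<forall>a b c. (a, b) \<in> \<rho> \<and> c \<in> S \<longrightarrow>
        (p a c, p b c) \<in> \<rho> \<and> (p c a, p c b) \<in> \<rho> \<and> (m a c, m b c) \<in> \<rho> \<and> (m c a, m c b) \<in> \<rho>)"

text \<open>S/rho is a b-lattice: (S/rho, .) a band and (S/rho, +) a semilattice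
 (associativity is inherited from S).\<close>
definition blattice_quotient :: "'a set \<Rightarrow> ('a \<Rightarrow> 'a \<Rightarrow> 'a) \<Rightarrow> ('a \<Rightarrow> 'a \<Rightarrow> 'a) \<Rightarrow> 'a rel \<Rightarrow> bool" where
  "blattice_quotient S p m \<rho> \<longleftrightarrow>
     (\<forall>a\<in>S. (m a a, a) \<in> \<rho> \<and> (p a a, a) \<in> \<rho>) \<and>
     (\<forall>a\<in>S. \<forall>b\<in>S. (p a b, p b a) \<in> \<rho>)"

definition blattice_of_nil_ext_rsr :: "'a set \<Rightarrow> ('a \<Rightarrow> 'a \<Rightarrow> 'a) \<Rightarrow> ('a \<Rightarrow> 'a \<Rightarrow> 'a) \<Rightarrow> bool" where
  "blattice_of_nil_ext_rsr S p m \<longleftrightarrow>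
     (\<exists>\<rho>. sr_congruence S p m \<rho> \<and> blattice_quotient S p m \<rho> \<and>
        (\<forall>a\<in>S. nil_ext_rect_skew_ring (\<rho> `` {a}) p m))"

end

theory Submission imports Defs begin

declare [[smt_timeout = 300]]

context
  fixes q :: "'a \<Rightarrow> 'a \<Rightarrow> 'a" (infixl "+." 65) and E :: "'a set"
  assumes bpa: "\<And>x y z. x\<in>E \<Longrightarrow> y\<in>E \<Longrightarrow> z\<in>E \<Longrightarrow> (x +. y) +. z = x +. (y +. z)"
  and bcl: "\<And>x y. x\<in>E \<Longrightarrow> y\<in>E \<Longrightarrow> x +. y \<in> E"
  and bid: "\<And>x. x\<in>E \<Longrightarrow> x +. x = x"
begin
lemma B1: "e\<in>E \<Longrightarrow> f\<in>E \<Longrightarrow> c\<in>E \<Longrightarrow> e +. f +. e = e \<Longrightarrow> f +. e +. f = f \<Longrightarrow> (e +. c) +. (f +. c) +. (e +. c) = e +. c"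
  by (smt (verit) bcl bid bpa)
lemma B2: "e\<in>E \<Longrightarrow> f\<in>E \<Longrightarrow> c\<in>E \<Longrightarrow> e +. f +. e = e \<Longrightarrow> f +. e +. f = f \<Longrightarrow> (c +. e) +. (c +. f) +. (c +. e) = c +. e"
  by (smt (verit) B1 bcl bid bpa)
lemma B3: "e\<in>E \<Longrightarrow> f\<in>E \<Longrightarrow> g\<in>E \<Longrightarrow> e +. f +. e = e \<Longrightarrow> f +. e +. f = f \<Longrightarrow> g +. f +. g = g \<Longrightarrow> f +. g +. f = f \<Longrightarrow> e +. g +. e = e"
  by (smt (verit) B1 bcl bpa)
lemma B4: "e\<in>E \<Longrightarrow> f\<in>E \<Longrightarrow> (e +. f) +. (f +. e) +. (e +. f) = e +. f"
  by (metis bcl bid bpa)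
lemma B5: "e\<in>E \<Longrightarrow> f\<in>E \<Longrightarrow> g\<in>E \<Longrightarrow> e +. g +. e = e \<Longrightarrow> g +. e +. g = g \<Longrightarrow> g +. f +. g = g \<Longrightarrow> f +. g +. f = f \<Longrightarrow> (e +. f) +. g +. (e +. f) = e +. f"
  by (smt (verit) bcl bid bpa)
lemma B6: "e\<in>E \<Longrightarrow> f\<in>E \<Longrightarrow> g\<in>E \<Longrightarrow> e +. g +. e = e \<Longrightarrow> g +. e +. g = g \<Longrightarrow> g +. f +. g = g \<Longrightarrow> f +. g +. f = f \<Longrightarrow> g +. (e +. f) +. g = g"
  by (smt (verit) bcl bid bpa)
end

locale srg =
  fixes S :: "'a set" and p :: "'a \<Rightarrow> 'a \<Rightarrow> 'a" (infixl "\<oplus>" 65)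
    and m :: "'a \<Rightarrow> 'a \<Rightarrow> 'a" (infixl "\<otimes>" 70)
  assumes sr: "sr_semiring S p m"
begin

lemma clp[simp]: "a \<in> S \<Longrightarrow> b \<in> S \<Longrightarrow> a \<oplus> b \<in> S"
  using sr unfolding sr_semiring_def by blast
lemma clm[simp]: "a \<in> S \<Longrightarrow> b \<in> S \<Longrightarrow> a \<otimes> b \<in> S"
  using sr unfolding sr_semiring_def by blast
lemma pa: "a \<in> S \<Longrightarrow> b \<in> S \<Longrightarrow> c \<in> S \<Longrightarrow> (a \<oplus> b) \<oplus> c = a \<oplus> (b \<oplus> c)"
  using sr unfolding sr_semiring_def by blast
lemma ma: "a \<in> S \<Longrightarrow> b \<in> S \<Longrightarrow> c \<in> S \<Longrightarrow> (a \<otimes> b) \<otimes> c = a \<otimes> (b \<otimes> c)"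
  using sr unfolding sr_semiring_def by blast
lemma dl: "a \<in> S \<Longrightarrow> b \<in> S \<Longrightarrow> c \<in> S \<Longrightarrow> a \<otimes> (b \<oplus> c) = a \<otimes> b \<oplus> a \<otimes> c"
  using sr unfolding sr_semiring_def by blast
lemma dr: "a \<in> S \<Longrightarrow> b \<in> S \<Longrightarrow> c \<in> S \<Longrightarrow> (b \<oplus> c) \<otimes> a = b \<otimes> a \<oplus> c \<otimes> a"
  using sr unfolding sr_semiring_def by blast

lemma nsE: "nsum p (Suc n) a = (if n = 0 then a else nsum p n a \<oplus> a)"
  by (cases n) auto

lemma nsS[simp]: "a \<in> S \<Longrightarrow> nsum p n a \<in> S"
  by (induction n) (auto simp: nsE)

lemma ns_Suc: "0 < n \<Longrightarrow> nsum p (Suc n) a = nsum p n a \<oplus> a"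
  by (cases n) auto

lemma ns_comm: "a \<in> S \<Longrightarrow> a \<oplus> nsum p n a = nsum p n a \<oplus> a"
proof (induction n)
  case 0 then show ?case by simp
next
  case (Suc n)
  show ?case
  proof (cases "n = 0")
    case True then show ?thesis by simp
  next
    case False
    then have "nsum p (Suc n) a = nsum p n a \<oplus> a" by (simp add: ns_Suc)
    then show ?thesis using Suc by (simp add: pa[symmetric])
  qed
qed

lemma ns_idem: "a \<oplus> a = a \<Longrightarrow> nsum p n a = a"
  by (induction n) (auto simp: nsE)

lemma ns_ml: "s \<in> S \<Longrightarrow> a \<in> S \<Longrightarrow> s \<otimes> nsum p n a = nsum p n (s \<otimes> a)"
  by (induction n) (auto simp: nsE dl)

lemma ns_mr: "s \<in> S \<Longrightarrow> a \<in> S \<Longrightarrow> nsum p n a \<otimes> s = nsum p n (a \<otimes> s)"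
  by (induction n) (auto simp: nsE dr)

lemma ns_form: "a \<in> S \<Longrightarrow> nsum p n a = a \<or> (\<exists>r\<in>S. nsum p n a = a \<oplus> r \<and> nsum p n a = r \<oplus> a)"
proof (cases "n \<le> 1")
  case True
  then have "n = 0 \<or> n = 1" by auto
  then show ?thesis by auto
next
  case False
  assume a: "a \<in> S"
  then obtain k where k: "n = Suc k" "0 < k" using False by (cases n) auto
  then have "nsum p n a = nsum p k a \<oplus> a" by (simp add: ns_Suc)
  moreover have "nsum p k a \<oplus> a = a \<oplus> nsum p k a" using ns_comm[OF a] by simp
  ultimately show ?thesis using a by auto
qed

lemma ns2: "nsum p 2 x = x \<oplus> x"
  by (simp add: numeral_2_eq_2)

lemma idem_ml: "e \<in> S \<Longrightarrow> s \<in> S \<Longrightarrow> e \<oplus> e = e \<Longrightarrow> s \<otimes> e \<oplus> s \<otimes> e = s \<otimes> e"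
  by (metis dl)
lemma idem_mr: "e \<in> S \<Longrightarrow> s \<in> S \<Longrightarrow> e \<oplus> e = e \<Longrightarrow> e \<otimes> s \<oplus> e \<otimes> s = e \<otimes> s"
  by (metis dr)


lemma idl: "g \<in> S \<Longrightarrow> y \<in> S \<Longrightarrow> g \<oplus> g = g \<Longrightarrow> g \<oplus> (g \<oplus> y) = g \<oplus> y"
  by (metis pa)

definition zprop :: "'a \<Rightarrow> 'a \<Rightarrow> bool" where
  "zprop a g \<longleftrightarrow> g \<in> S \<and> g \<oplus> g = g \<and>
     (\<forall>s. s \<in> S \<and> s \<oplus> s = s \<longrightarrow> s \<otimes> a = s \<otimes> g \<and> a \<otimes> s = g \<otimes> s)"

definition zr :: "'a \<Rightarrow> 'a" where "zr a = (THE g. zprop a g)"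

context
  assumes qcr: "quasi_completely_regular S p m"
    and eb: "subsemigroup (add_idem S p) p"
begin

lemma band: "e \<in> S \<Longrightarrow> f \<in> S \<Longrightarrow> e \<oplus> e = e \<Longrightarrow> f \<oplus> f = f \<Longrightarrow> (e \<oplus> f) \<oplus> (e \<oplus> f) = e \<oplus> f"
  using eb unfolding subsemigroup_def add_idem_def by auto

lemma F1: assumes e: "e \<in> S" "e \<oplus> e = e" shows "e \<otimes> e = e"
proof -
  obtain n where "n > 0" "completely_regular S p m (nsum p n e)"
    using qcr e unfolding quasi_completely_regular_def by blast
  then obtain x where x: "x \<in> S" "e = e \<oplus> x \<oplus> e" "e \<oplus> x = x \<oplus> e" "e \<otimes> (e \<oplus> x) = e \<oplus> x"
    unfolding completely_regular_def using ns_idem[OF e(2)] by auto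
  have "e = x \<oplus> e \<oplus> e" using x by simp
  also have "\<dots> = x \<oplus> e" using x e by (simp add: pa)
  finally have h: "e \<oplus> x = e" using x by simp
  show ?thesis using x(4) h by simp
qed

lemma zex: assumes a: "a \<in> S"
  shows "\<exists>g. zprop a g \<and> (\<exists>t\<in>S. g = a \<oplus> t) \<and> (\<exists>t\<in>S. g = t \<oplus> a)"
proof -
  obtain k where k: "k > 0" "completely_regular S p m (nsum p k a)"
    using qcr a unfolding quasi_completely_regular_def by blast
  define u where "u = nsum p k a"
  have uS: "u \<in> S" using a u_def by simp
  obtain x where x: "x \<in> S" "u \<oplus> x \<oplus> u = u" "u \<oplus> x = x \<oplus> u"
    using k(2) unfolding completely_regular_def u_def by (metis (no_types))
  have h1: "u \<oplus> (x \<oplus> u) = u" using x(1,2) uS by (simp add: pa)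
  have h2: "u \<oplus> (x \<oplus> (u \<oplus> y)) = u \<oplus> y" if "y \<in> S" for y
    using x(1,2) uS that by (simp add: pa[symmetric])
  define g where "g = u \<oplus> x"
  have gS: "g \<in> S" using g_def uS x by simp
  have gg: "g \<oplus> g = g" unfolding g_def using x(1) uS h2 by (simp add: pa)
  have ug: "u \<oplus> g = u" unfolding g_def using x(1,3) uS h1 by (simp add: pa)
  have gu: "g \<oplus> u = u" unfolding g_def using x(1) uS h1 by (simp add: pa)
  have P: "s \<otimes> a = s \<otimes> g \<and> a \<otimes> s = g \<otimes> s" if s: "s \<in> S" "s \<oplus> s = s" for s
  proof
    have su: "s \<otimes> u = s \<otimes> a" unfolding u_def using s a
      by (simp add: ns_ml ns_idem idem_mr)
    have 1: "s \<otimes> u = s \<otimes> u \<oplus> s \<otimes> g" using dl[of s u g] s uS gS ug by simp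
    have 2: "s \<otimes> g = s \<otimes> u \<oplus> s \<otimes> x" using dl[of s u x] s uS x g_def by simp
    have 3: "s \<otimes> u \<oplus> (s \<otimes> u \<oplus> s \<otimes> x) = s \<otimes> u \<oplus> s \<otimes> x"
      using su s a uS x by (simp add: idl idem_mr)
    have "s \<otimes> u = s \<otimes> g" using 1 2 3 by simp
    then show "s \<otimes> a = s \<otimes> g" using su by simp
  next
    have us: "u \<otimes> s = a \<otimes> s" unfolding u_def using s a
      by (simp add: ns_mr ns_idem idem_ml)
    have 1: "u \<otimes> s = g \<otimes> s \<oplus> u \<otimes> s" using dr[of s g u] s uS gS gu by simp
    have 2: "g \<otimes> s = x \<otimes> s \<oplus> u \<otimes> s" using dr[of s x u] s uS x g_def by simp
    have 3: "x \<otimes> s \<oplus> u \<otimes> s \<oplus> u \<otimes> s = x \<otimes> s \<oplus> u \<otimes> s"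
      using us s a uS x by (simp add: pa idem_ml)
    have "u \<otimes> s = g \<otimes> s" using 1 2 3 by simp
    then show "a \<otimes> s = g \<otimes> s" using us by simp
  qed
  have zp: "zprop a g" unfolding zprop_def using gS gg P by blast
  have R: "\<exists>t\<in>S. g = a \<oplus> t"
  proof (cases "u = a")
    case True then show ?thesis using x unfolding g_def by blast
  next
    case False
    then obtain r where r: "r \<in> S" "u = a \<oplus> r" using ns_form[OF a, of k] u_def by blast
    then show ?thesis unfolding g_def using x a by (intro bexI[of _ "r \<oplus> x"]) (simp_all add: pa)
  qed
  have L: "\<exists>t\<in>S. g = t \<oplus> a"
  proof (cases "u = a")
    case True then show ?thesis using x unfolding g_def by blast
  next
    case False
    then obtain r where r: "r \<in> S" "u = r \<oplus> a" using ns_form[OF a, of k] u_def by blast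
    then show ?thesis unfolding g_def using x a by (intro bexI[of _ "x \<oplus> r"]) (simp_all add: pa)
  qed
  show ?thesis using zp R L by blast
qed

lemma zuniq: assumes a: "a \<in> S" and 1: "zprop a g1" and 2: "zprop a g2" shows "g1 = g2"
proof -
  have g: "g1 \<in> S" "g1 \<oplus> g1 = g1" "g2 \<in> S" "g2 \<oplus> g2 = g2" using 1 2 unfolding zprop_def by auto
  have "g1 = g1 \<otimes> g1" using F1 g by simp
  also have "\<dots> = g1 \<otimes> a" using 1 g unfolding zprop_def by simp
  also have "\<dots> = g1 \<otimes> g2" using 2 g unfolding zprop_def by simp
  finally have A: "g1 = g1 \<otimes> g2" .
  have "g2 = g2 \<otimes> g2" using F1 g by simp
  also have "\<dots> = a \<otimes> g2" using 2 g unfolding zprop_def by simp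
  also have "\<dots> = g1 \<otimes> g2" using 1 g unfolding zprop_def by simp
  finally show ?thesis using A by simp
qed

lemma zr_prop: assumes a: "a \<in> S" shows "zprop a (zr a)"
proof -
  obtain g where g: "zprop a g" using zex[OF a] by blast
  have "zr a = g" unfolding zr_def
    by (rule the_equality) (use g zuniq[OF a] in auto)
  then show ?thesis using g by simp
qed

lemma zr_eq: "a \<in> S \<Longrightarrow> zprop a g \<Longrightarrow> zr a = g"
  using zr_prop zuniq by blast

lemma zS[simp]: "a \<in> S \<Longrightarrow> zr a \<in> S" using zr_prop[of a] unfolding zprop_def by simp
lemma zid[simp]: "a \<in> S \<Longrightarrow> zr a \<oplus> zr a = zr a" using zr_prop[of a] unfolding zprop_def by simp
lemma zid2: "a \<in> S \<Longrightarrow> y \<in> S \<Longrightarrow> zr a \<oplus> (zr a \<oplus> y) = zr a \<oplus> y" by (simp add: idl)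
lemma zl: "a \<in> S \<Longrightarrow> s \<in> S \<Longrightarrow> s \<oplus> s = s \<Longrightarrow> s \<otimes> a = s \<otimes> zr a"
  using zr_prop[of a] unfolding zprop_def by simp
lemma zrr: "a \<in> S \<Longrightarrow> s \<in> S \<Longrightarrow> s \<oplus> s = s \<Longrightarrow> a \<otimes> s = zr a \<otimes> s"
  using zr_prop[of a] unfolding zprop_def by simp
lemma zR: assumes a: "a \<in> S" shows "\<exists>t\<in>S. zr a = a \<oplus> t"
proof -
  obtain g where "zprop a g" "\<exists>t\<in>S. g = a \<oplus> t" using zex[OF a] by blast
  then show ?thesis using zr_eq[OF a] by simp
qed
lemma zL: assumes a: "a \<in> S" shows "\<exists>t\<in>S. zr a = t \<oplus> a"
proof -
  obtain g where "zprop a g" "\<exists>t\<in>S. g = t \<oplus> a" using zex[OF a] by blast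
  then show ?thesis using zr_eq[OF a] by simp
qed

lemma zE: "e \<in> S \<Longrightarrow> e \<oplus> e = e \<Longrightarrow> zr e = e"
  by (rule zr_eq) (auto simp: zprop_def)

lemma z_add: assumes ab: "a \<in> S" "b \<in> S" shows "zr (a \<oplus> b) = zr a \<oplus> zr b"
proof (rule zr_eq)
  have "s \<otimes> (a \<oplus> b) = s \<otimes> (zr a \<oplus> zr b) \<and> (a \<oplus> b) \<otimes> s = (zr a \<oplus> zr b) \<otimes> s"
    if s: "s \<in> S" "s \<oplus> s = s" for s
    using s ab by (simp add: dl dr zl[of a] zl[of b] zrr[of a] zrr[of b])
  then show "zprop (a \<oplus> b) (zr a \<oplus> zr b)" unfolding zprop_def
    using ab band[of "zr a" "zr b"] by simp
qed (use ab in simp)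

lemma z_mul: assumes ab: "a \<in> S" "b \<in> S" shows "zr (a \<otimes> b) = zr a \<otimes> zr b"
proof (rule zr_eq)
  have "s \<otimes> (a \<otimes> b) = s \<otimes> (zr a \<otimes> zr b) \<and> a \<otimes> b \<otimes> s = zr a \<otimes> zr b \<otimes> s"
    if s: "s \<in> S" "s \<oplus> s = s" for s
  proof
    have "s \<otimes> (a \<otimes> b) = (s \<otimes> zr a) \<otimes> b" using s ab by (simp add: ma[symmetric] zl[of a])
    also have "\<dots> = (s \<otimes> zr a) \<otimes> zr b" using s ab by (intro zl) (simp_all add: idem_mr)
    finally show "s \<otimes> (a \<otimes> b) = s \<otimes> (zr a \<otimes> zr b)" using s ab by (simp add: ma)
    have "a \<otimes> b \<otimes> s = a \<otimes> (zr b \<otimes> s)" using s ab by (simp add: ma zrr[of b])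
    also have "\<dots> = zr a \<otimes> (zr b \<otimes> s)" using s ab by (intro zrr) (simp_all add: idem_ml)
    finally show "a \<otimes> b \<otimes> s = zr a \<otimes> zr b \<otimes> s" using s ab by (simp add: ma)
  qed
  then show "zprop (a \<otimes> b) (zr a \<otimes> zr b)" unfolding zprop_def
    using ab by (simp add: idem_ml)
qed (use ab in simp)

lemma z_ns: "a \<in> S \<Longrightarrow> zr (nsum p n a) = zr a"
  by (induction n) (auto simp: nsE z_add)

lemma z_la: "a \<in> S \<Longrightarrow> zr a \<otimes> a = zr a"
  using zl[of a "zr a"] F1[of "zr a"] by simp
lemma z_ra: "a \<in> S \<Longrightarrow> a \<otimes> zr a = zr a"
  using zrr[of a "zr a"] F1[of "zr a"] by simp

lemma reg_H: assumes a: "a \<in> S" and x: "x \<in> S" and r: "a \<oplus> x \<oplus> a = a"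
  shows "a \<oplus> zr a = a" "zr a \<oplus> a = a"
proof -
  define g where "g = zr a"
  define e where "e = a \<oplus> x"
  define f where "f = x \<oplus> a"
  have r1: "a \<oplus> (x \<oplus> a) = a" using r a x by (simp add: pa)
  have r2: "a \<oplus> (x \<oplus> (a \<oplus> y)) = a \<oplus> y" if "y \<in> S" for y
    using r a x that by (simp add: pa[symmetric])
  have gS: "g \<in> S" "g \<oplus> g = g" using a g_def by auto
  have eS: "e \<in> S" "e \<oplus> e = e" using a x r2 unfolding e_def by (simp_all add: pa)
  have fS: "f \<in> S" "f \<oplus> f = f" using a x r1 unfolding f_def by (simp_all add: pa)
  have "e = e \<otimes> e" using F1 eS by simp
  also have "\<dots> = a \<otimes> e \<oplus> x \<otimes> e" unfolding e_def using a x by (simp add: dr)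
  also have "\<dots> = g \<otimes> e \<oplus> x \<otimes> e" using zrr[OF a eS] g_def by simp
  finally have e1: "e = g \<otimes> e \<oplus> x \<otimes> e" .
  have ge: "g \<otimes> e = g \<oplus> g \<otimes> x" unfolding e_def g_def using a x
    by (simp add: dl z_la)
  have "g \<oplus> e = g \<oplus> (g \<oplus> g \<otimes> x \<oplus> x \<otimes> e)" using e1 ge by simp
  also have "\<dots> = g \<oplus> g \<otimes> x \<oplus> x \<otimes> e" using gS eS x by (simp add: pa idl)
  also have "\<dots> = e" using e1 ge by simp
  finally have ge2: "g \<oplus> e = e" .
  have ae: "e \<oplus> a = a" using r unfolding e_def by simp
  have "g \<oplus> a = g \<oplus> (e \<oplus> a)" using ae by simp
  also have "\<dots> = a" using ge2 ae gS eS a pa[of g e a] by simp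
  finally show "zr a \<oplus> a = a" using g_def by simp
  have "f = f \<otimes> f" using F1 fS by simp
  also have "\<dots> = f \<otimes> x \<oplus> f \<otimes> a" unfolding f_def using a x by (simp add: dl)
  also have "\<dots> = f \<otimes> x \<oplus> f \<otimes> g" using zl[OF a fS] g_def by simp
  finally have f1: "f = f \<otimes> x \<oplus> f \<otimes> g" .
  have fg: "f \<otimes> g = x \<otimes> g \<oplus> g" unfolding f_def g_def using a x
    by (simp add: dr z_ra)
  have "f \<oplus> g = f \<otimes> x \<oplus> (x \<otimes> g \<oplus> (g \<oplus> g))" using f1 fg fS gS x by (metis pa clm)
  also have "\<dots> = f" using f1 fg gS by (simp add: pa)
  finally have fg2: "f \<oplus> g = f" .
  have af: "a \<oplus> f = a" using r1 unfolding f_def by simp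
  have "a \<oplus> g = a \<oplus> f \<oplus> g" using af by simp
  also have "\<dots> = a" using fg2 af gS fS a pa[of a f g] by simp
  finally show "a \<oplus> zr a = a" using g_def by simp
qed

lemma reg_cr: assumes a: "a \<in> S" and x: "x \<in> S" and r: "a \<oplus> x \<oplus> a = a"
  shows "\<exists>y\<in>S. a \<oplus> y \<oplus> a = a \<and> a \<oplus> y = y \<oplus> a \<and> a \<otimes> (a \<oplus> y) = a \<oplus> y
     \<and> a \<oplus> y = zr a \<and> zr y = zr a \<and> y \<oplus> zr a = y \<and> zr a \<oplus> y = y"
proof -
  define g where "g = zr a"
  have gS: "g \<in> S" "g \<oplus> g = g" using a g_def by auto
  have ag: "a \<oplus> g = a" "g \<oplus> a = a" using reg_H[OF a x r] g_def by auto
  obtain t where t: "t \<in> S" "g = a \<oplus> t" using zR[OF a] g_def by blast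
  obtain t' where t': "t' \<in> S" "g = t' \<oplus> a" using zL[OF a] g_def by blast
  define y where "y = g \<oplus> x \<oplus> g"
  have yS: "y \<in> S" using gS x y_def by simp
  have r1: "a \<oplus> (x \<oplus> a) = a" using r a x by (simp add: pa)
  have r2: "a \<oplus> (x \<oplus> (a \<oplus> z)) = a \<oplus> z" if "z \<in> S" for z
    using r a x that by (simp add: pa[symmetric])
  have ag2: "a \<oplus> (g \<oplus> z) = a \<oplus> z" if "z \<in> S" for z using ag gS a that pa[of a g z] by simp
  have ay: "a \<oplus> y = g"
  proof -
    have "a \<oplus> y = a \<oplus> (x \<oplus> g)" unfolding y_def using a x gS ag2 by (simp add: pa)
    also have "\<dots> = a \<oplus> t" using t r2 by simp
    finally show ?thesis using t by simp
  qed
  have ya: "y \<oplus> a = g"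
  proof -
    have "y \<oplus> a = g \<oplus> (x \<oplus> a)" unfolding y_def using a x gS ag by (simp add: pa)
    also have "\<dots> = t' \<oplus> (a \<oplus> (x \<oplus> a))" using t' a x by (simp add: pa)
    finally show ?thesis using t' r1 by simp
  qed
  have zy: "zr y = g"
  proof -
    have "zr (a \<oplus> x \<oplus> a) = zr a \<oplus> zr x \<oplus> zr a" using a x by (simp add: z_add)
    then have "zr a = zr a \<oplus> zr x \<oplus> zr a" using r by simp
    moreover have "zr y = g \<oplus> zr x \<oplus> g" unfolding y_def using gS x by (simp add: z_add zE)
    ultimately show ?thesis using g_def by simp
  qed
  have yg: "y \<oplus> g = y" "g \<oplus> y = y" unfolding y_def using gS x by (simp_all add: pa idl)
  show ?thesis
    using yS ay ya ag z_ra[OF a] zy g_def yg by (intro bexI[of _ y]) auto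
qed

lemma reg_crS: "a \<in> S \<Longrightarrow> x \<in> S \<Longrightarrow> a \<oplus> x \<oplus> a = a \<Longrightarrow> completely_regular S p m a"
proof -
  assume "a \<in> S" "x \<in> S" "a \<oplus> x \<oplus> a = a"
  then obtain y where y: "y \<in> S" "a \<oplus> y \<oplus> a = a" "a \<oplus> y = y \<oplus> a" "a \<otimes> (a \<oplus> y) = a \<oplus> y"
    using reg_cr by blast
  have "a = a \<oplus> y \<oplus> a \<and> a \<oplus> y = y \<oplus> a \<and> a \<otimes> (a \<oplus> y) = a \<oplus> y" using y(2,3,4) by simp
  then show ?thesis unfolding completely_regular_def using y(1) by blast
qed

lemma g_plus_reg: assumes g: "g \<in> S" "g \<oplus> g = g" and x: "x \<in> S" and D: "g \<oplus> zr x \<oplus> g = g"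
  shows "g \<oplus> x \<oplus> (g \<oplus> zr x) = g \<oplus> x" and "zr x \<oplus> g \<oplus> (x \<oplus> g) = x \<oplus> g"
proof -
  obtain s where s: "s \<in> S" "zr x = x \<oplus> s" using zR[OF x] by blast
  obtain s' where s': "s' \<in> S" "zr x = s' \<oplus> x" using zL[OF x] by blast
  have D2: "g \<oplus> (zr x \<oplus> (g \<oplus> z)) = g \<oplus> z" if "z \<in> S" for z
    using D g x that by (simp add: pa[symmetric])
  have gg2: "g \<oplus> (g \<oplus> z) = g \<oplus> z" if "z \<in> S" for z using g that idl by simp
  have r1: "g \<oplus> x \<oplus> (s \<oplus> g) \<oplus> (g \<oplus> x) = g \<oplus> x"
  proof -
    have "g \<oplus> x \<oplus> (s \<oplus> g) \<oplus> (g \<oplus> x) = g \<oplus> ((x \<oplus> s) \<oplus> (g \<oplus> (g \<oplus> x)))"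
      using g x s by (simp add: pa)
    also have "\<dots> = g \<oplus> x" using s(2)[symmetric] D2 gg2 x by simp
    finally show ?thesis .
  qed
  have r2: "x \<oplus> g \<oplus> (g \<oplus> s') \<oplus> (x \<oplus> g) = x \<oplus> g"
  proof -
    have "x \<oplus> g \<oplus> (g \<oplus> s') \<oplus> (x \<oplus> g) = x \<oplus> (g \<oplus> (g \<oplus> (s' \<oplus> x) \<oplus> g))"
      using g x s' by (simp add: pa)
    also have "\<dots> = x \<oplus> g" using s'(2)[symmetric] D g x gg2 by (simp add: pa)
    finally show ?thesis .
  qed
  have "g \<oplus> x \<oplus> zr (g \<oplus> x) = g \<oplus> x" using reg_H(1)[OF _ _ r1] g x s by simp
  then show "g \<oplus> x \<oplus> (g \<oplus> zr x) = g \<oplus> x" using g x by (simp add: z_add zE)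
  have "zr (x \<oplus> g) \<oplus> (x \<oplus> g) = x \<oplus> g" using reg_H(2)[OF _ _ r2] g x s' by simp
  then show "zr x \<oplus> g \<oplus> (x \<oplus> g) = x \<oplus> g" using g x by (simp add: z_add zE)
qed

lemma twox: assumes a: "a \<in> S" and x: "x \<in> S" and r: "a \<oplus> x \<oplus> a = a"
  shows "a \<oplus> (x \<oplus> x) \<oplus> (a \<oplus> a) = a"
proof -
  define g where "g = zr a"
  define z where "z = zr x"
  have gS: "g \<in> S" "g \<oplus> g = g" using a g_def by auto
  have zS: "z \<in> S" "z \<oplus> z = z" using x z_def by auto
  have ag: "a \<oplus> g = a" "g \<oplus> a = a" using reg_H[OF a x r] g_def by auto
  have "zr (a \<oplus> x \<oplus> a) = zr a \<oplus> zr x \<oplus> zr a" using a x by (simp add: z_add)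
  then have D: "g \<oplus> z \<oplus> g = g" using r unfolding g_def z_def by simp
  have A: "g \<oplus> x \<oplus> (g \<oplus> z) = g \<oplus> x" using g_plus_reg(1)[OF gS x] D z_def by simp
  have B: "z \<oplus> g \<oplus> (x \<oplus> g) = x \<oplus> g" using g_plus_reg(2)[OF gS x] D z_def by simp
  have A1: "g \<oplus> (x \<oplus> (g \<oplus> (z \<oplus> y))) = g \<oplus> (x \<oplus> y)" if "y \<in> S" for y
  proof -
    have "(g \<oplus> x \<oplus> (g \<oplus> z)) \<oplus> y = (g \<oplus> x) \<oplus> y" using A by simp
    then show ?thesis using gS zS x that by (simp add: pa)
  qed
  have gxz: "g \<oplus> (x \<oplus> (z \<oplus> y)) = g \<oplus> (x \<oplus> y)" if "y \<in> S" for y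
  proof -
    have "g \<oplus> (x \<oplus> (z \<oplus> y)) = g \<oplus> (x \<oplus> (g \<oplus> (z \<oplus> (z \<oplus> y))))" using A1 zS that by simp
    also have "\<dots> = g \<oplus> (x \<oplus> (g \<oplus> (z \<oplus> y)))" using zS that idl by simp
    finally show ?thesis using A1 that by simp
  qed
  have B1: "z \<oplus> (g \<oplus> (x \<oplus> (g \<oplus> y))) = x \<oplus> (g \<oplus> y)" if "y \<in> S" for y
  proof -
    have "(z \<oplus> g \<oplus> (x \<oplus> g)) \<oplus> y = (x \<oplus> g) \<oplus> y" using B by simp
    then show ?thesis using gS zS x that by (simp add: pa)
  qed
  have key: "g \<oplus> (x \<oplus> (x \<oplus> (g \<oplus> y))) = g \<oplus> (x \<oplus> (g \<oplus> (x \<oplus> (g \<oplus> y))))" if "y \<in> S" for y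
  proof -
    have "g \<oplus> (x \<oplus> (x \<oplus> (g \<oplus> y))) = g \<oplus> (x \<oplus> (z \<oplus> (g \<oplus> (x \<oplus> (g \<oplus> y)))))"
      using B1 that by simp
    also have "\<dots> = g \<oplus> (x \<oplus> (g \<oplus> (x \<oplus> (g \<oplus> y))))" using gxz that gS x by simp
    finally show ?thesis .
  qed
  obtain t where t: "t \<in> S" "g = a \<oplus> t" using zR[OF a] g_def by blast
  obtain t' where t': "t' \<in> S" "g = t' \<oplus> a" using zL[OF a] g_def by blast
  have R1: "a \<oplus> (x \<oplus> (g \<oplus> y)) = g \<oplus> y" if "y \<in> S" for y
  proof -
    have "a \<oplus> (x \<oplus> (g \<oplus> y)) = (a \<oplus> x \<oplus> a) \<oplus> (t \<oplus> y)" using t a x that by (simp add: pa)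
    then show ?thesis using r t a that by (simp add: pa)
  qed
  have R2: "g \<oplus> (x \<oplus> (a \<oplus> y)) = g \<oplus> y" if "y \<in> S" for y
  proof -
    have "g \<oplus> (x \<oplus> (a \<oplus> y)) = t' \<oplus> ((a \<oplus> x \<oplus> a) \<oplus> y)" using t' a x that by (simp add: pa)
    then show ?thesis using r t' a that by (simp add: pa)
  qed
  have ag1: "a \<oplus> (g \<oplus> y) = a \<oplus> y" if "y \<in> S" for y using ag gS a that pa[of a g y] by simp
  have ag2: "g \<oplus> (a \<oplus> y) = a \<oplus> y" if "y \<in> S" for y using ag gS a that pa[of g a y] by simp
  have "a \<oplus> (x \<oplus> x) \<oplus> (a \<oplus> a) = a \<oplus> (g \<oplus> (x \<oplus> (x \<oplus> (g \<oplus> (a \<oplus> a)))))"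
    using a x gS ag1 ag2 by (simp add: pa)
  also have "\<dots> = a \<oplus> (g \<oplus> (x \<oplus> (g \<oplus> (x \<oplus> (g \<oplus> (a \<oplus> a))))))" using key a by simp
  also have "\<dots> = a \<oplus> (x \<oplus> (g \<oplus> (x \<oplus> (a \<oplus> a))))" using a x gS ag1 ag2 by simp
  also have "\<dots> = g \<oplus> (x \<oplus> (a \<oplus> a))" using R1 a x by simp
  also have "\<dots> = a" using R2 a ag by simp
  finally show ?thesis .
qed

lemma Reg_sub: assumes a: "a \<in> S" and x: "x \<in> S" and r: "a \<oplus> x \<oplus> a = a"
  and b: "b \<in> S" and y: "y \<in> S" and r': "b \<oplus> y \<oplus> b = b"
  shows "(a \<oplus> b) \<oplus> (y \<oplus> x) \<oplus> (a \<oplus> b) = a \<oplus> b"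
proof -
  define w where "w = x \<oplus> a \<oplus> (b \<oplus> y)"
  have wS: "w \<in> S" using w_def a b x y by simp
  have ra: "a \<oplus> (x \<oplus> a) = a" using r a x by (simp add: pa)
  have rb: "b \<oplus> (y \<oplus> (b \<oplus> z)) = b \<oplus> z" if "z \<in> S" for z using r' b y that by (simp add: pa[symmetric])
  have u: "(x \<oplus> a) \<oplus> (x \<oplus> a) = x \<oplus> a" using ra a x by (simp add: pa)
  have v: "(b \<oplus> y) \<oplus> (b \<oplus> y) = b \<oplus> y" using rb b y by (simp add: pa)
  have ww: "w \<oplus> w = w" unfolding w_def using band[OF _ _ u v] a b x y by simp
  have r1: "a \<oplus> (x \<oplus> (a \<oplus> z)) = a \<oplus> z" if "z \<in> S" for z using r a x that by (simp add: pa[symmetric])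
  have r2: "b \<oplus> (y \<oplus> b) = b" using r' b y by (simp add: pa)
  have "(a \<oplus> b) \<oplus> (y \<oplus> x) \<oplus> (a \<oplus> b) = a \<oplus> (w \<oplus> w) \<oplus> b"
    unfolding w_def using a b x y r1 r2 by (simp add: pa)
  also have "\<dots> = a \<oplus> w \<oplus> b" using ww by simp
  also have "\<dots> = a \<oplus> b" unfolding w_def using a b x y r1 r2 by (simp add: pa)
  finally show ?thesis .
qed

lemma Hrel: assumes u: "u \<in> S" and v: "v \<in> S" and g: "g \<in> S"
  and ug: "u \<oplus> g = u" "g \<oplus> u = u" and vg: "v \<oplus> g = v" "g \<oplus> v = v"
  and gu: "\<exists>t\<in>S. g = u \<oplus> t" "\<exists>t\<in>S. g = t \<oplus> u"
  and gv: "\<exists>t\<in>S. g = v \<oplus> t" "\<exists>t\<in>S. g = t \<oplus> v"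
  shows "greenL S p u v \<and> greenR S p u v"
proof -
  obtain t1 where t1: "t1 \<in> S" "g = u \<oplus> t1" using gu by blast
  obtain t2 where t2: "t2 \<in> S" "g = t2 \<oplus> u" using gu by blast
  obtain t3 where t3: "t3 \<in> S" "g = v \<oplus> t3" using gv by blast
  obtain t4 where t4: "t4 \<in> S" "g = t4 \<oplus> v" using gv by blast
  have "u = (u \<oplus> t4) \<oplus> v" using ug t4 u v pa[of u t4 v] by simp
  moreover have "v = (v \<oplus> t2) \<oplus> u" using vg t2 u v pa[of v t2 u] by simp
  moreover have "u = v \<oplus> (t3 \<oplus> u)" using ug t3 u v pa[of v t3 u] by simp
  moreover have "v = u \<oplus> (t1 \<oplus> v)" using vg t1 u v pa[of u t1 v] by simp
  ultimately show ?thesis unfolding greenL_def greenR_def using u v t1 t2 t3 t4 by auto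
qed

definition DE :: "'a \<Rightarrow> 'a \<Rightarrow> bool" where
  "DE e f \<longleftrightarrow> e \<oplus> f \<oplus> e = e \<and> f \<oplus> e \<oplus> f = f"

definition rho :: "'a rel" where
  "rho = {(a, b). a \<in> S \<and> b \<in> S \<and> DE (zr a) (zr b)}"

lemma Epa: "\<And>x y z. x\<in>{e\<in>S. e \<oplus> e = e} \<Longrightarrow> y\<in>{e\<in>S. e \<oplus> e = e} \<Longrightarrow> z\<in>{e\<in>S. e \<oplus> e = e} \<Longrightarrow> (x \<oplus> y) \<oplus> z = x \<oplus> (y \<oplus> z)"
  using pa by auto
lemma Ecl: "\<And>x y. x\<in>{e\<in>S. e \<oplus> e = e} \<Longrightarrow> y\<in>{e\<in>S. e \<oplus> e = e} \<Longrightarrow> x \<oplus> y \<in> {e\<in>S. e \<oplus> e = e}"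
  using band by auto
lemma Eid: "\<And>x. x\<in>{e\<in>S. e \<oplus> e = e} \<Longrightarrow> x \<oplus> x = x" by auto

lemmas EB1 = B1[where q=p and E="{e\<in>S. e \<oplus> e = e}", OF Epa Ecl Eid]
lemmas EB2 = B2[where q=p and E="{e\<in>S. e \<oplus> e = e}", OF Epa Ecl Eid]
lemmas EB3 = B3[where q=p and E="{e\<in>S. e \<oplus> e = e}", OF Epa Ecl Eid]
lemmas EB4 = B4[where q=p and E="{e\<in>S. e \<oplus> e = e}", OF Epa Ecl Eid]
lemmas EB5 = B5[where q=p and E="{e\<in>S. e \<oplus> e = e}", OF Epa Ecl Eid]
lemmas EB6 = B6[where q=p and E="{e\<in>S. e \<oplus> e = e}", OF Epa Ecl Eid]

lemma DE_sym: "DE e f \<Longrightarrow> DE f e" unfolding DE_def by simp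
lemma DE_refl: "e \<in> S \<Longrightarrow> e \<oplus> e = e \<Longrightarrow> DE e e" unfolding DE_def by simp
lemma DE_trans: "e \<in> S \<Longrightarrow> f \<in> S \<Longrightarrow> g \<in> S \<Longrightarrow> e \<oplus> e = e \<Longrightarrow> f \<oplus> f = f \<Longrightarrow> g \<oplus> g = g \<Longrightarrow>
   DE e f \<Longrightarrow> DE f g \<Longrightarrow> DE e g"
  unfolding DE_def using EB3[of e f g] EB3[of g f e] by simp
lemma DE_addr: "e \<in> S \<Longrightarrow> f \<in> S \<Longrightarrow> c \<in> S \<Longrightarrow> e \<oplus> e = e \<Longrightarrow> f \<oplus> f = f \<Longrightarrow> c \<oplus> c = c \<Longrightarrow>
   DE e f \<Longrightarrow> DE (e \<oplus> c) (f \<oplus> c)"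
  unfolding DE_def using EB1[of e f c] EB1[of f e c] by simp
lemma DE_addl: "e \<in> S \<Longrightarrow> f \<in> S \<Longrightarrow> c \<in> S \<Longrightarrow> e \<oplus> e = e \<Longrightarrow> f \<oplus> f = f \<Longrightarrow> c \<oplus> c = c \<Longrightarrow>
   DE e f \<Longrightarrow> DE (c \<oplus> e) (c \<oplus> f)"
  unfolding DE_def using EB2[of e f c] EB2[of f e c] by simp
lemma DE_comm: "e \<in> S \<Longrightarrow> f \<in> S \<Longrightarrow> e \<oplus> e = e \<Longrightarrow> f \<oplus> f = f \<Longrightarrow> DE (e \<oplus> f) (f \<oplus> e)"
  unfolding DE_def using EB4[of e f] EB4[of f e] by simp
lemma DE_sum: "e \<in> S \<Longrightarrow> f \<in> S \<Longrightarrow> g \<in> S \<Longrightarrow> e \<oplus> e = e \<Longrightarrow> f \<oplus> f = f \<Longrightarrow> g \<oplus> g = g \<Longrightarrow>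
   DE e g \<Longrightarrow> DE f g \<Longrightarrow> DE (e \<oplus> f) g"
  unfolding DE_def using EB5[of e f g] EB6[of e f g] by simp
lemma DE_mr: "e \<in> S \<Longrightarrow> f \<in> S \<Longrightarrow> c \<in> S \<Longrightarrow> DE e f \<Longrightarrow> DE (e \<otimes> c) (f \<otimes> c)"
  unfolding DE_def using dr[of c "e \<oplus> f" e] dr[of c e f] dr[of c "f \<oplus> e" f] dr[of c f e] by simp
lemma DE_ml: "e \<in> S \<Longrightarrow> f \<in> S \<Longrightarrow> c \<in> S \<Longrightarrow> DE e f \<Longrightarrow> DE (c \<otimes> e) (c \<otimes> f)"
  unfolding DE_def using dl[of c "e \<oplus> f" e] dl[of c e f] dl[of c "f \<oplus> e" f] dl[of c f e] by simp
lemma idm: "e \<in> S \<Longrightarrow> f \<in> S \<Longrightarrow> e \<oplus> e = e \<Longrightarrow> f \<oplus> f = f \<Longrightarrow> (e \<otimes> f) \<oplus> (e \<otimes> f) = e \<otimes> f"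
  by (simp add: idem_ml)
lemma DE_prod: assumes "e \<in> S" "f \<in> S" "g \<in> S" "e \<oplus> e = e" "f \<oplus> f = f" "g \<oplus> g = g"
  "DE e g" "DE f g" shows "DE (e \<otimes> f) g"
proof -
  have 1: "DE (e \<otimes> f) (g \<otimes> f)" using DE_mr assms by blast
  have 2: "DE (g \<otimes> f) (g \<otimes> g)" using DE_ml assms DE_sym by blast
  have 3: "DE (e \<otimes> f) (g \<otimes> g)" using DE_trans[OF _ _ _ _ _ _ 1 2] assms idm by simp
  then show ?thesis using F1 assms by simp
qed

lemma rho_equiv: "equiv S rho"
proof -
  have "refl_on S rho" unfolding refl_on_def rho_def using DE_refl by auto
  moreover have "sym rho" unfolding sym_def rho_def using DE_sym by auto
  moreover have "trans rho" unfolding trans_def rho_def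
  proof (clarify)
    fix a b c assume "a \<in> S" "b \<in> S" "DE (zr a) (zr b)" "c \<in> S" "DE (zr b) (zr c)"
    then show "DE (zr a) (zr c)" using DE_trans[of "zr a" "zr b" "zr c"] by simp
  qed
  moreover have "rho \<subseteq> S \<times> S" unfolding rho_def by auto
  ultimately show ?thesis unfolding equiv_def by simp
qed

lemma rho_cong: assumes ab: "(a, b) \<in> rho" and c: "c \<in> S"
  shows "(a \<oplus> c, b \<oplus> c) \<in> rho \<and> (c \<oplus> a, c \<oplus> b) \<in> rho \<and> (a \<otimes> c, b \<otimes> c) \<in> rho \<and> (c \<otimes> a, c \<otimes> b) \<in> rho"
proof -
  have a: "a \<in> S" "b \<in> S" "DE (zr a) (zr b)" using ab unfolding rho_def by auto
  show ?thesis unfolding rho_def using a c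
    by (simp add: z_add z_mul DE_addr DE_addl DE_mr DE_ml)
qed

lemma rho_bl: "blattice_quotient S p m rho"
  unfolding blattice_quotient_def rho_def
  by (simp add: z_add z_mul F1 DE_refl DE_comm)

lemma C_iff: "a \<in> S \<Longrightarrow> b \<in> rho `` {a} \<longleftrightarrow> b \<in> S \<and> DE (zr a) (zr b)"
  unfolding rho_def by auto

lemma C_add: assumes a: "a \<in> S" and b: "b \<in> rho `` {a}" and c: "c \<in> rho `` {a}"
  shows "b \<oplus> c \<in> rho `` {a}"
proof -
  have "b \<in> S" "c \<in> S" "DE (zr a) (zr b)" "DE (zr a) (zr c)" using b c C_iff[OF a] by auto
  then have "DE (zr b \<oplus> zr c) (zr a)" using DE_sum[of "zr b" "zr c" "zr a"] a DE_sym by simp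
  then show ?thesis using C_iff[OF a] \<open>b \<in> S\<close> \<open>c \<in> S\<close> DE_sym by (simp add: z_add)
qed

lemma C_mul: assumes a: "a \<in> S" and b: "b \<in> rho `` {a}" and c: "c \<in> rho `` {a}"
  shows "b \<otimes> c \<in> rho `` {a}"
proof -
  have "b \<in> S" "c \<in> S" "DE (zr a) (zr b)" "DE (zr a) (zr c)" using b c C_iff[OF a] by auto
  then have "DE (zr b \<otimes> zr c) (zr a)" using DE_prod[of "zr b" "zr c" "zr a"] a DE_sym by simp
  then show ?thesis using C_iff[OF a] \<open>b \<in> S\<close> \<open>c \<in> S\<close> DE_sym by (simp add: z_mul)
qed

lemma sum_reg: assumes b: "b \<in> S" "b \<oplus> zr b = b" "zr b \<oplus> b = b" and x: "x \<in> S"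
  and D: "zr b \<oplus> zr x \<oplus> zr b = zr b"
  shows "\<exists>w\<in>S. b \<oplus> x \<oplus> w \<oplus> (b \<oplus> x) = b \<oplus> x" "\<exists>w\<in>S. x \<oplus> b \<oplus> w \<oplus> (x \<oplus> b) = x \<oplus> b"
proof -
  obtain s where s: "s \<in> S" "x \<oplus> s = zr x" using zR[OF x] by auto
  obtain s' where s': "s' \<in> S" "s' \<oplus> x = zr x" using zL[OF x] by auto
  obtain t where t: "t \<in> S" "b \<oplus> t = zr b" using zR[OF b(1)] by auto
  obtain t' where t': "t' \<in> S" "t' \<oplus> b = zr b" using zL[OF b(1)] by auto
  have zb: "zr b \<in> S" "zr b \<oplus> zr b = zr b" using b by auto
  have zx: "zr x \<in> S" using x by auto
  have D2: "zr b \<oplus> (zr x \<oplus> (zr b \<oplus> y)) = zr b \<oplus> y" if "y \<in> S" for y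
    using D zb zx that pa[of "zr b" "zr x" "zr b"] pa[of "zr b" "zr x \<oplus> zr b" y] pa[of "zr x" "zr b" y] by simp
  have b1: "b \<oplus> (zr b \<oplus> y) = b \<oplus> y" if "y \<in> S" for y using b zb that pa[of b "zr b" y] by simp
  have zzx: "zr b \<oplus> (zr b \<oplus> y) = zr b \<oplus> y" if "y \<in> S" for y using zb that idl by simp
  have "b \<oplus> x \<oplus> (s \<oplus> zr b \<oplus> t') \<oplus> (b \<oplus> x) = b \<oplus> ((x \<oplus> s) \<oplus> (zr b \<oplus> ((t' \<oplus> b) \<oplus> x)))"
    using b(1) x s(1) t'(1) zb(1) by (simp add: pa)
  also have "\<dots> = b \<oplus> (zr x \<oplus> (zr b \<oplus> (zr b \<oplus> x)))" using s(2) t'(2) by simp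
  also have "\<dots> = b \<oplus> (zr x \<oplus> (zr b \<oplus> x))" using zzx x by simp
  also have "\<dots> = b \<oplus> (zr b \<oplus> (zr x \<oplus> (zr b \<oplus> x)))" using b1 x zb zx by simp
  also have "\<dots> = b \<oplus> x" using D2 b1 x by simp
  finally show "\<exists>w\<in>S. b \<oplus> x \<oplus> w \<oplus> (b \<oplus> x) = b \<oplus> x" using s t' zb by (intro bexI[of _ "s \<oplus> zr b \<oplus> t'"]) simp_all
  have "x \<oplus> b \<oplus> (t \<oplus> zr b \<oplus> s') \<oplus> (x \<oplus> b) = x \<oplus> ((b \<oplus> t) \<oplus> (zr b \<oplus> ((s' \<oplus> x) \<oplus> b)))"
    using b(1) x s'(1) t(1) zb(1) by (simp add: pa)
  also have "\<dots> = x \<oplus> (zr b \<oplus> (zr b \<oplus> (zr x \<oplus> b)))" using s'(2) t(2) by simp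
  also have "\<dots> = x \<oplus> (zr b \<oplus> (zr x \<oplus> b))" using zzx zx b by simp
  also have "\<dots> = x \<oplus> (zr b \<oplus> (zr x \<oplus> (zr b \<oplus> b)))" using b(3) by simp
  also have "\<dots> = x \<oplus> (zr b \<oplus> b)" using D2[of b] b(1) by simp
  also have "\<dots> = x \<oplus> b" using b(3) by simp
  finally show "\<exists>w\<in>S. x \<oplus> b \<oplus> w \<oplus> (x \<oplus> b) = x \<oplus> b" using s' t zb by (intro bexI[of _ "t \<oplus> zr b \<oplus> s'"]) simp_all
qed

lemma mul_K: assumes b: "b \<in> S" "b \<oplus> zr b = b" "zr b \<oplus> b = b" and x: "x \<in> S"
  shows "b \<otimes> x \<oplus> zr (b \<otimes> x) = b \<otimes> x" "zr (b \<otimes> x) \<oplus> b \<otimes> x = b \<otimes> x"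
        "x \<otimes> b \<oplus> zr (x \<otimes> b) = x \<otimes> b" "zr (x \<otimes> b) \<oplus> x \<otimes> b = x \<otimes> b"
proof -
  have zb: "zr b \<in> S" "zr b \<oplus> zr b = zr b" using b by auto
  have 1: "zr b \<otimes> x = zr b \<otimes> zr x" using zl[OF x zb] .
  have 2: "x \<otimes> zr b = zr x \<otimes> zr b" using zrr[OF x zb] .
  show "b \<otimes> x \<oplus> zr (b \<otimes> x) = b \<otimes> x" using b x 1 dr[of x b "zr b"] by (simp add: z_mul)
  show "zr (b \<otimes> x) \<oplus> b \<otimes> x = b \<otimes> x" using b x 1 dr[of x "zr b" b] by (simp add: z_mul)
  show "x \<otimes> b \<oplus> zr (x \<otimes> b) = x \<otimes> b" using b x 2 dl[of x b "zr b"] by (simp add: z_mul)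
  show "zr (x \<otimes> b) \<oplus> x \<otimes> b = x \<otimes> b" using b x 2 dl[of x "zr b" b] by (simp add: z_mul)
qed

definition Kset :: "'a \<Rightarrow> 'a set" where
  "Kset a = {b \<in> rho `` {a}. b \<oplus> zr b = b \<and> zr b \<oplus> b = b}"

lemma K_C: "Kset a \<subseteq> rho `` {a}" unfolding Kset_def by auto

lemma regK: assumes a: "a \<in> S" and y: "y \<in> rho `` {a}" and w: "w \<in> S" and r: "y \<oplus> w \<oplus> y = y"
  shows "y \<in> Kset a"
  using reg_H[OF _ w r] y C_iff[OF a] unfolding Kset_def by auto

lemma K_DE: assumes a: "a \<in> S" and b: "b \<in> rho `` {a}" and c: "c \<in> rho `` {a}"
  shows "DE (zr b) (zr c)"
proof -
  have "b \<in> S" "c \<in> S" "DE (zr a) (zr b)" "DE (zr a) (zr c)" using b c C_iff[OF a] by auto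
  then show ?thesis using DE_trans[of "zr b" "zr a" "zr c"] a DE_sym by simp
qed

lemma K_addC: assumes a: "a \<in> S" and b: "b \<in> Kset a" and x: "x \<in> rho `` {a}"
  shows "b \<oplus> x \<in> Kset a" "x \<oplus> b \<in> Kset a"
proof -
  have bC: "b \<in> rho `` {a}" using b K_C by auto
  have bb: "b \<in> S" "b \<oplus> zr b = b" "zr b \<oplus> b = b" using b C_iff[OF a] unfolding Kset_def by auto
  have xS: "x \<in> S" using x C_iff[OF a] by auto
  have D: "zr b \<oplus> zr x \<oplus> zr b = zr b" using K_DE[OF a bC x] unfolding DE_def by simp
  obtain w where "w \<in> S" "b \<oplus> x \<oplus> w \<oplus> (b \<oplus> x) = b \<oplus> x" using sum_reg(1)[OF bb xS D] by blast
  then show "b \<oplus> x \<in> Kset a" using regK[OF a C_add[OF a bC x]] by blast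
  obtain w where "w \<in> S" "x \<oplus> b \<oplus> w \<oplus> (x \<oplus> b) = x \<oplus> b" using sum_reg(2)[OF bb xS D] by blast
  then show "x \<oplus> b \<in> Kset a" using regK[OF a C_add[OF a x bC]] by blast
qed

lemma K_mulC: assumes a: "a \<in> S" and b: "b \<in> Kset a" and x: "x \<in> rho `` {a}"
  shows "b \<otimes> x \<in> Kset a" "x \<otimes> b \<in> Kset a"
proof -
  have bC: "b \<in> rho `` {a}" using b K_C by auto
  have bb: "b \<in> S" "b \<oplus> zr b = b" "zr b \<oplus> b = b" using b C_iff[OF a] unfolding Kset_def by auto
  have xS: "x \<in> S" using x C_iff[OF a] by auto
  show "b \<otimes> x \<in> Kset a" unfolding Kset_def using C_mul[OF a bC x] mul_K[OF bb xS] by simp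
  show "x \<otimes> b \<in> Kset a" unfolding Kset_def using C_mul[OF a x bC] mul_K[OF bb xS] by simp
qed

lemma K_cr: assumes a: "a \<in> S" and b: "b \<in> Kset a"
  shows "\<exists>x\<in>Kset a. b \<oplus> x \<oplus> b = b \<and> b \<oplus> x = x \<oplus> b \<and> b \<otimes> (b \<oplus> x) = b \<oplus> x \<and> b \<oplus> x = zr b"
proof -
  have bC: "b \<in> rho `` {a}" using b K_C by auto
  have bb: "b \<in> S" "b \<oplus> zr b = b" "zr b \<oplus> b = b" "DE (zr a) (zr b)" using b C_iff[OF a] unfolding Kset_def by auto
  obtain t where t: "t \<in> S" "zr b = b \<oplus> t" using zR[OF bb(1)] by blast
  have r: "b \<oplus> t \<oplus> b = b" using t bb by simp
  obtain y where y: "y \<in> S" "b \<oplus> y \<oplus> b = b" "b \<oplus> y = y \<oplus> b" "b \<otimes> (b \<oplus> y) = b \<oplus> y"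
     "b \<oplus> y = zr b" "zr y = zr b" "y \<oplus> zr b = y" "zr b \<oplus> y = y"
    using reg_cr[OF bb(1) t(1) r] by blast
  have "y \<in> Kset a" unfolding Kset_def using y bb C_iff[OF a] by simp
  then show ?thesis using y by blast
qed

lemma K_z: assumes a: "a \<in> S" and b: "b \<in> Kset a" shows "zr b \<in> Kset a"
proof -
  have bb: "b \<in> S" "DE (zr a) (zr b)" using b C_iff[OF a] unfolding Kset_def by auto
  then show ?thesis unfolding Kset_def using C_iff[OF a] by (simp add: zE)
qed

lemma K_add: "a \<in> S \<Longrightarrow> b \<in> Kset a \<Longrightarrow> c \<in> Kset a \<Longrightarrow> b \<oplus> c \<in> Kset a"
  using K_addC(1)[of a b c] K_C[of a] by auto
lemma K_mul: "a \<in> S \<Longrightarrow> b \<in> Kset a \<Longrightarrow> c \<in> Kset a \<Longrightarrow> b \<otimes> c \<in> Kset a"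
  using K_mulC(1)[of a b c] K_C[of a] by auto
lemma K_S: "a \<in> S \<Longrightarrow> Kset a \<subseteq> S" unfolding Kset_def using C_iff by auto

lemma K_ideal: assumes a: "a \<in> S" and b: "b \<in> Kset a" shows "ideal_principal (Kset a) p b = Kset a"
proof
  show "ideal_principal (Kset a) p b \<subseteq> Kset a"
    unfolding ideal_principal_def using b K_add[OF a] by blast
  show "Kset a \<subseteq> ideal_principal (Kset a) p b"
  proof
    fix d assume d: "d \<in> Kset a"
    obtain xb where xb: "xb \<in> Kset a" "b \<oplus> xb = zr b" using K_cr[OF a b] by blast
    have dd: "d \<in> S" "zr d \<oplus> d = d" using d C_iff[OF a] unfolding Kset_def by auto
    have bS: "b \<in> S" "xb \<in> S" using b xb K_S[OF a] by auto
    have D: "zr d \<oplus> zr b \<oplus> zr d = zr d"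
      using K_DE[OF a] d b K_C unfolding DE_def by blast
    have "zr d \<oplus> b \<oplus> (xb \<oplus> d) = zr d \<oplus> zr b \<oplus> d"
      using pa[of "zr d" b "xb \<oplus> d"] pa[of b xb d] pa[of "zr d" "zr b" d] xb dd bS by simp
    also have "\<dots> = zr d \<oplus> zr b \<oplus> (zr d \<oplus> d)" using dd(2) by simp
    also have "\<dots> = (zr d \<oplus> zr b \<oplus> zr d) \<oplus> d" using dd bS pa[of "zr d \<oplus> zr b" "zr d" d] by simp
    also have "\<dots> = d" using D dd by simp
    finally have "d = zr d \<oplus> b \<oplus> (xb \<oplus> d)" by simp
    moreover have "zr d \<in> Kset a" "xb \<oplus> d \<in> Kset a" using K_z[OF a d] K_add[OF a xb(1) d] by auto
    ultimately show "d \<in> ideal_principal (Kset a) p b" unfolding ideal_principal_def by blast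
  qed
qed

lemma sr_sub: assumes T: "T \<subseteq> S" and cl: "\<forall>a\<in>T. \<forall>b\<in>T. a \<oplus> b \<in> T \<and> a \<otimes> b \<in> T"
  shows "sr_semiring T p m"
proof -
  have "(a \<oplus> b) \<oplus> c = a \<oplus> (b \<oplus> c) \<and> (a \<otimes> b) \<otimes> c = a \<otimes> (b \<otimes> c) \<and>
        a \<otimes> (b \<oplus> c) = a \<otimes> b \<oplus> a \<otimes> c \<and> (b \<oplus> c) \<otimes> a = b \<otimes> a \<oplus> c \<otimes> a"
    if "a \<in> T" "b \<in> T" "c \<in> T" for a b c
  proof -
    have "a \<in> S" "b \<in> S" "c \<in> S" using that T by auto
    then show ?thesis using pa[of a b c] ma[of a b c] dl[of a b c] dr[of a b c] by simp
  qed
  then show ?thesis unfolding sr_semiring_def using cl by simp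
qed

lemma K_rsr: assumes a: "a \<in> S" shows "rect_skew_ring (Kset a) p m"
proof -
  have sr: "sr_semiring (Kset a) p m" by (rule sr_sub[OF K_S[OF a]]) (simp add: K_add[OF a] K_mul[OF a])
  have cr: "completely_regular (Kset a) p m b" if b: "b \<in> Kset a" for b
  proof -
    obtain x where x: "x \<in> Kset a" "b \<oplus> x \<oplus> b = b" "b \<oplus> x = x \<oplus> b" "b \<otimes> (b \<oplus> x) = b \<oplus> x"
      using K_cr[OF a b] by blast
    then have "b = b \<oplus> x \<oplus> b \<and> b \<oplus> x = x \<oplus> b \<and> b \<otimes> (b \<oplus> x) = b \<oplus> x" by simp
    then show ?thesis unfolding completely_regular_def using x(1) by blast
  qed
  have J: "greenJ (Kset a) p b c" if "b \<in> Kset a" "c \<in> Kset a" for b c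
    unfolding greenJ_def using that K_ideal[OF a] by simp
  have E: "subsemigroup (add_idem (Kset a) p) p"
    unfolding subsemigroup_def add_idem_def
  proof (intro ballI)
    fix e f assume e: "e \<in> {e \<in> Kset a. e \<oplus> e = e}" and f: "f \<in> {e \<in> Kset a. e \<oplus> e = e}"
    then have "e \<in> S" "f \<in> S" using K_S[OF a] by auto
    then show "e \<oplus> f \<in> {e \<in> Kset a. e \<oplus> e = e}" using e f K_add[OF a] band by simp
  qed
  show ?thesis unfolding rect_skew_ring_def completely_simple_def using sr cr J E by blast
qed

lemma C_nil: assumes a: "a \<in> S" shows "nil_ext_rect_skew_ring (rho `` {a}) p m"
proof -
  have srC: "sr_semiring (rho `` {a}) p m"
    by (rule sr_sub) (use C_add[OF a] C_mul[OF a] C_iff[OF a] in auto)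
  have srK: "sr_semiring (Kset a) p m" using K_rsr[OF a] unfolding rect_skew_ring_def completely_simple_def by blast
  have bi: "bi_ideal (rho `` {a}) (Kset a) p m"
    unfolding bi_ideal_def using K_C[of a] K_addC[OF a] K_mulC[OF a] by simp
  have pw: "\<exists>n>0. nsum p n b \<in> Kset a" if b: "b \<in> rho `` {a}" for b
  proof -
    have bS: "b \<in> S" "DE (zr a) (zr b)" using b C_iff[OF a] by auto
    obtain n where n: "n > 0" "completely_regular S p m (nsum p n b)"
      using qcr bS unfolding quasi_completely_regular_def by blast
    then obtain x where x: "x \<in> S" "nsum p n b = nsum p n b \<oplus> x \<oplus> nsum p n b"
      unfolding completely_regular_def by blast
    have "nsum p n b \<in> rho `` {a}" using C_iff[OF a] bS by (simp add: z_ns)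
    then have "nsum p n b \<in> Kset a" using regK[OF a _ x(1)] x(2) by simp
    then show ?thesis using n by blast
  qed
  have "rect_skew_ring (Kset a) p m \<and> nil_extension (rho `` {a}) (Kset a) p m"
    unfolding nil_extension_def using srK bi pw K_rsr[OF a] by simp
  then show ?thesis unfolding nil_ext_rect_skew_ring_def using srC by blast
qed

lemma i_iii: "blattice_of_nil_ext_rsr S p m"
proof -
  have "sr_congruence S p m rho" unfolding sr_congruence_def using rho_equiv rho_cong by simp
  then show ?thesis unfolding blattice_of_nil_ext_rsr_def using rho_bl C_nil by blast
qed

end

lemma mindex_reg: assumes "add_quasi_regular S p" "b \<in> S"
  shows "0 < mindex S p b \<and> add_regular S p (nsum p (mindex S p b) b)"
proof -
  obtain n where "n > 0" "add_regular S p (nsum p n b)" using assms unfolding add_quasi_regular_def by blast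
  then show ?thesis unfolding mindex_def
    using LeastI[where P="\<lambda>n. 0 < n \<and> add_regular S p (nsum p n b)" and k=n] by blast
qed

lemma mindex_one: assumes "add_regular S p b" shows "mindex S p b = 1"
  unfolding mindex_def
proof (rule Least_equality)
  show "0 < (1::nat) \<and> add_regular S p (nsum p 1 b)" using assms by simp
qed auto

lemma reg_def2: "add_regular S p a \<longleftrightarrow> (\<exists>x\<in>S. a \<oplus> x \<oplus> a = a)"
  unfolding add_regular_def by (metis (no_types, lifting))

lemma Spa: "\<And>x y z. x\<in>S \<Longrightarrow> y\<in>S \<Longrightarrow> z\<in>S \<Longrightarrow> (x \<oplus> y) \<oplus> z = x \<oplus> (y \<oplus> z)" using pa by auto

context
  assumes aqr: "add_quasi_regular S p"
    and H: "\<forall>b\<in>S. Hstar S p (b \<otimes> b) b"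
    and C2: "\<forall>a\<in>S. \<forall>x\<in>S. a = a \<oplus> x \<oplus> a \<longrightarrow> a = a \<oplus> nsum p 2 x \<oplus> nsum p 2 a"
    and Rs: "subsemigroup (Reg_add S p) p"
begin

lemma sC: "\<And>a y. a\<in>S \<Longrightarrow> y \<in> S \<Longrightarrow> a \<oplus> y \<oplus> a = a \<Longrightarrow> a \<oplus> (y \<oplus> y) \<oplus> (a \<oplus> a) = a"
  using C2 by (simp add: ns2)

lemma SL1: assumes a: "a \<in> S" "x \<in> S" "a \<oplus> x \<oplus> a = a" "x \<oplus> a \<oplus> x = x"
  shows "a \<oplus> (a \<oplus> x \<oplus> x \<oplus> x \<oplus> a) = (a \<oplus> x \<oplus> x \<oplus> x \<oplus> a) \<oplus> a"
  by (smt (verit) sC a clp Spa)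
lemma SL2: assumes a: "a \<in> S" "x \<in> S" "a \<oplus> x \<oplus> a = a" "x \<oplus> a \<oplus> x = x"
  shows "a \<oplus> (a \<oplus> x \<oplus> x \<oplus> x \<oplus> a) \<oplus> a = a"
  by (smt (verit) sC a clp Spa)
lemma SL3: assumes a: "e \<in> S" "f \<in> S" "z \<in> S" "e \<oplus> e = e" "f \<oplus> f = f" "e \<oplus> f \<oplus> z \<oplus> (e \<oplus> f) = e \<oplus> f" "z \<oplus> (e \<oplus> f) \<oplus> z = z"
  shows "(e \<oplus> f) \<oplus> (e \<oplus> f) = e \<oplus> f"
  by (smt (verit, best) sC a clp Spa)

lemma ii_band: "subsemigroup (add_idem S p) p"
  unfolding subsemigroup_def add_idem_def
proof (intro ballI)
  fix e f assume e: "e \<in> {e \<in> S. e \<oplus> e = e}" and f: "f \<in> {e \<in> S. e \<oplus> e = e}"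
  have eS: "e \<in> S" "e \<oplus> e = e" "f \<in> S" "f \<oplus> f = f" using e f by auto
  have "e \<oplus> e \<oplus> e = e" "f \<oplus> f \<oplus> f = f" using eS by simp_all
  then have "e \<in> Reg_add S p" "f \<in> Reg_add S p" unfolding Reg_add_def reg_def2 using eS by blast+
  then have "e \<oplus> f \<in> Reg_add S p" using Rs unfolding subsemigroup_def by blast
  then obtain w where w: "w \<in> S" "e \<oplus> f \<oplus> w \<oplus> (e \<oplus> f) = e \<oplus> f" unfolding Reg_add_def reg_def2 by auto
  define z where "z = w \<oplus> (e \<oplus> f) \<oplus> w"
  have zS: "z \<in> S" using z_def w eS by simp
  have z1: "e \<oplus> f \<oplus> z \<oplus> (e \<oplus> f) = e \<oplus> f" unfolding z_def using w eS
    by (metis Spa clp)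
  have z2: "z \<oplus> (e \<oplus> f) \<oplus> z = z" unfolding z_def using w eS
    by (metis Spa clp)
  show "e \<oplus> f \<in> {e \<in> S. e \<oplus> e = e}" using SL3[OF eS(1) eS(3) zS eS(2) eS(4) z1 z2] eS by simp
qed

lemma ii_qcr: "quasi_completely_regular S p m"
  unfolding quasi_completely_regular_def
proof
  fix a assume a: "a \<in> S"
  obtain n where n: "n > 0" "add_regular S p (nsum p n a)" using aqr a unfolding add_quasi_regular_def by blast
  define u where "u = nsum p n a"
  have uS: "u \<in> S" using a u_def by simp
  obtain x0 where x0: "x0 \<in> S" "u \<oplus> x0 \<oplus> u = u" using n(2) u_def unfolding reg_def2 by blast
  define x where "x = x0 \<oplus> u \<oplus> x0"
  have xS: "x \<in> S" using x_def x0 uS by simp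
  have ux: "u \<oplus> x \<oplus> u = u" unfolding x_def using x0 uS by (metis Spa clp)
  have xu: "x \<oplus> u \<oplus> x = x" unfolding x_def using x0 uS by (metis Spa clp)
  define y where "y = u \<oplus> x \<oplus> x \<oplus> x \<oplus> u"
  have yS: "y \<in> S" using y_def xS uS by simp
  have c1: "u \<oplus> y = y \<oplus> u" using SL1[OF uS xS ux xu] y_def by simp
  have c2: "u \<oplus> y \<oplus> u = u" using SL2[OF uS xS ux xu] y_def by simp
  define h where "h = u \<oplus> y"
  have hS: "h \<in> S" using h_def uS yS by simp
  have hu: "h \<oplus> u = u" using c2 h_def by simp
  have h2: "h = y \<oplus> u" using c1 h_def by simp
  define v where "v = u \<otimes> u"
  define k where "k = u \<otimes> h"
  have vS: "v \<in> S" using v_def uS by simp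
  have uyS: "u \<otimes> y \<in> S" using uS yS by simp
  have v1: "v = v \<oplus> u \<otimes> y \<oplus> v"
  proof -
    have "v = u \<otimes> (u \<oplus> y \<oplus> u)" using c2 v_def by simp
    also have "\<dots> = v \<oplus> u \<otimes> y \<oplus> v" using dl uS yS v_def by simp
    finally show ?thesis .
  qed
  have k1: "k = v \<oplus> u \<otimes> y" unfolding k_def h_def v_def using dl uS yS by simp
  have k2: "k = u \<otimes> y \<oplus> v" unfolding k_def using h2 dl uS yS v_def by simp
  have vk: "v \<oplus> k = v" using v1 k2 vS uyS by (simp add: pa)
  have kv: "k \<oplus> v = v" using v1 k1 by simp
  have vreg: "add_regular S p v" unfolding reg_def2 using v1[symmetric] uyS by blast
  have ureg: "add_regular S p u" unfolding reg_def2 using x0 by auto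
  have Hu: "Hstar S p v u" using H uS v_def by simp
  then have GL: "greenL S p v u" and GR: "greenR S p v u"
    unfolding Hstar_def Lstar_def Rstar_def using mindex_one[OF vreg] mindex_one[OF ureg] by auto
  have uk: "u \<oplus> k = u"
  proof (cases "u = v")
    case True then show ?thesis using vk by simp
  next
    case False
    then obtain y' where "y' \<in> S" "u = y' \<oplus> v" using GL unfolding greenL_def by auto
    then show ?thesis using vk vS k1 uyS by (metis pa clp)
  qed
  have hv: "h \<oplus> v = v"
  proof (cases "v = u")
    case True then show ?thesis using hu by simp
  next
    case False
    then obtain x' where "x' \<in> S" "v = u \<oplus> x'" using GR unfolding greenR_def by auto
    then show ?thesis using hu hS uS by (metis pa)
  qed
  have "h \<oplus> k = h" using h2 uk yS uS k1 vS uyS by (metis pa clp)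
  moreover have "h \<oplus> k = k" using hv k1 hS vS uyS by (metis pa)
  ultimately have kh: "k = h" by simp
  have "completely_regular S p m u"
    unfolding completely_regular_def using yS c1 c2 kh k_def h_def by (intro bexI[of _ y]) auto
  then show "\<exists>n>0. completely_regular S p m (nsum p n a)" using n(1) u_def by blast
qed

end

context
  assumes qcr: "quasi_completely_regular S p m"
    and eb: "subsemigroup (add_idem S p) p"
begin

lemma i_ii: "add_quasi_regular S p \<and> (\<forall>b\<in>S. Hstar S p (b \<otimes> b) b) \<and>
   (\<forall>a\<in>S. \<forall>x\<in>S. a = a \<oplus> x \<oplus> a \<longrightarrow> a = a \<oplus> nsum p 2 x \<oplus> nsum p 2 a) \<and>
   subsemigroup (Reg_add S p) p"
proof (intro conjI)
  show aqr: "add_quasi_regular S p"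
    using qcr unfolding quasi_completely_regular_def add_quasi_regular_def completely_regular_def add_regular_def
    by blast
  show "\<forall>b\<in>S. Hstar S p (b \<otimes> b) b"
  proof
    fix b assume b: "b \<in> S"
    define u where "u = nsum p (mindex S p b) b"
    define v where "v = nsum p (mindex S p (b \<otimes> b)) (b \<otimes> b)"
    have uS: "u \<in> S" "add_regular S p u" using mindex_reg[OF aqr b] b u_def by auto
    have vS: "v \<in> S" "add_regular S p v" using mindex_reg[OF aqr, of "b \<otimes> b"] b v_def by auto
    obtain x where x: "x \<in> S" "u \<oplus> x \<oplus> u = u" using uS unfolding reg_def2 by auto
    obtain y where y: "y \<in> S" "v \<oplus> y \<oplus> v = v" using vS unfolding reg_def2 by auto
    have zu: "zr u = zr b" using u_def b qcr eb z_ns by simp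
    have zv: "zr v = zr b" using v_def b qcr eb z_ns z_mul F1 by simp
    have "greenL S p v u \<and> greenR S p v u"
      using Hrel[OF qcr eb vS(1) uS(1) zS[OF qcr eb b]] reg_H[OF qcr eb uS(1) x(1) x(2)] reg_H[OF qcr eb vS(1) y(1) y(2)]
        zR[OF qcr eb uS(1)] zL[OF qcr eb uS(1)] zR[OF qcr eb vS(1)] zL[OF qcr eb vS(1)] zu zv by simp
    then show "Hstar S p (b \<otimes> b) b" unfolding Hstar_def Lstar_def Rstar_def u_def v_def by simp
  qed
  show "\<forall>a\<in>S. \<forall>x\<in>S. a = a \<oplus> x \<oplus> a \<longrightarrow> a = a \<oplus> nsum p 2 x \<oplus> nsum p 2 a"
    using twox[OF qcr eb] by (simp add: ns2)
  show "subsemigroup (Reg_add S p) p"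
    unfolding subsemigroup_def Reg_add_def reg_def2 using Reg_sub[OF qcr eb] by fastforce
qed

end

lemma iii_i: assumes "blattice_of_nil_ext_rsr S p m" shows "quasi_completely_regular S p m"
  unfolding quasi_completely_regular_def
proof
  fix a assume a: "a \<in> S"
  obtain r where r: "sr_congruence S p m r" "\<forall>a\<in>S. nil_ext_rect_skew_ring (r `` {a}) p m"
    using assms unfolding blattice_of_nil_ext_rsr_def by blast
  have eq: "equiv S r" using r(1) unfolding sr_congruence_def by blast
  have aC: "a \<in> r `` {a}" using eq a unfolding equiv_def refl_on_def by auto
  have CS: "r `` {a} \<subseteq> S" using eq unfolding equiv_def refl_on_def by auto
  obtain K where K: "rect_skew_ring K p m" "nil_extension (r `` {a}) K p m"
    using r(2) a unfolding nil_ext_rect_skew_ring_def by blast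
  obtain n where n: "n > 0" "nsum p n a \<in> K" using K(2) aC unfolding nil_extension_def by blast
  have KS: "K \<subseteq> S" using K(2) CS unfolding nil_extension_def bi_ideal_def by blast
  have "completely_regular K p m (nsum p n a)" using K(1) n(2)
    unfolding rect_skew_ring_def completely_simple_def by blast
  then have "completely_regular S p m (nsum p n a)" using KS unfolding completely_regular_def by blast
  then show "\<exists>n>0. completely_regular S p m (nsum p n a)" using n(1) by blast
qed

end

theorem theorem3p6:
  fixes S :: "'a set" and p m :: "'a \<Rightarrow> 'a \<Rightarrow> 'a"
  assumes "sr_semiring S p m"
  shows "((quasi_completely_regular S p m \<and> subsemigroup (add_idem S p) p)
           \<longleftrightarrow>
          (add_quasi_regular S p \<and>
           (\<forall>b\<in>S. Hstar S p (m b b) b) \<and>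
           (\<forall>a\<in>S. \<forall>x\<in>S. a = p (p a x) a \<longrightarrow> a = p (p a (nsum p 2 x)) (nsum p 2 a)) \<and>
           subsemigroup (Reg_add S p) p))
       \<and>
         ((quasi_completely_regular S p m \<and> subsemigroup (add_idem S p) p)
           \<longleftrightarrow>
          (blattice_of_nil_ext_rsr S p m \<and> subsemigroup (add_idem S p) p))"
proof -
  interpret srg S p m by unfold_locales (rule assms)
  show ?thesis
    using i_ii ii_band ii_qcr i_iii iii_i by blast
qed

end
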